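(* Let $\Omega\subset\mathbb R^3$ be a bounded domain and $T'>0$. For $\alpha>0$ let $W_{\mathrm{sg},\alpha}(\varphi):=\alpha\big((1+\alpha+\varphi)\ln(1+\alpha+\varphi)+(1+\alpha-\varphi)\ln(1+\alpha-\varphi)\big)$ for $|\varphi|\le1+\alpha$ (with $0\ln0=0$), and define on $L^2(0,T';L^2(\Omega))$ $$\mathcal E_{\mathrm{sg},\alpha}(\varphi):=\begin{cases}\int_0^{T'}\!\int_\Omega W_{\mathrm{sg},\alpha}(\varphi)\,dx\,d\tau&\text{if }|\varphi|\le1+\alpha\text{ a.e. in }\Omega\times(0,T'),\\+\infty&\text{otherwise},\end{cases}\qquad \mathcal I_K(\varphi):=\begin{cases}0&\varphi\in K,\\+\infty&\varphi\notin K,\end{cases}$$ with $K:=\{\varphi\in L^2(0,T';L^2(\Omega)):|\varphi|\le1\text{ a.e. in }\Omega\times(0,T')\}$. Then $\mathcal E_{\mathrm{sg},\alpha}\to\mathcal I_K$ in the sense of Mosco in $L^2(0,T';L^2(\Omega))$ as $\alpha\searrow0$, i.e.: (M1) for every family $\varphi_\alpha\rightharpoonup\varphi$ weakly in $L^2(0,T';L^2(\Omega))$, $\liminf_{\alpha\searrow0}\mathcal E_{\mathrm{sg},\alpha}(\varphi_\alpha)\ge\mathcal I_K(\varphi)$; (M2) for every $\varphi\in L^2(0,T';L^2(\Omega))$ there is a family $\varphi_\alpha\to\varphi$ strongly in $L^2(0,T';L^2(\Omega))$ with $\limsup_{\alpha\searrow0}\mathcal E_{\mathrm{sg},\alpha}(\varphi_\alpha)\le\mathcal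 I_K(\varphi)$. *)

theory Defs
  imports "HOL-Analysis.Analysis"
begin

definition xlnx :: "real \<Rightarrow> real" where
  "xlnx x = (if x = 0 then 0 else x * ln x)"

definition W_sg :: "real \<Rightarrow> real \<Rightarrow> real" where
  "W_sg \<alpha> s = \<alpha> * (xlnx (1 + \<alpha> + s) + xlnx (1 + \<alpha> - s))"

text \<open>Space-time cylinder Omega x (0,T') and its Lebesgue measure;
  L^2(0,T';L^2(Omega)) is identified with L^2(Omega x (0,T')).\<close>
definition cyl :: "(real^3) set \<Rightarrow> real \<Rightarrow> ((real^3) \<times> real) set" where
  "cyl \<Omega> T' = \<Omega> \<times> {0<..<T'}"

definition L2 :: "'a measure \<Rightarrow> ('a \<Rightarrow> real) \<Rightarrow> bool" where
  "L2 M f \<longleftrightarrow> f \<in> borel_measurable M \<and> integrable M (\<lambda>x. (f x)\<^sup>2)"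

definition E_sg :: "'a measure \<Rightarrow> real \<Rightarrow> ('a \<Rightarrow> real) \<Rightarrow> ereal" where
  "E_sg M \<alpha> \<phi> = (if AE x in M. \<bar>\<phi> x\<bar> \<le> 1 + \<alpha>
                    then ereal (\<integral>x. W_sg \<alpha> (\<phi> x) \<partial>M) else \<infinity>)"

definition I_K :: "'a measure \<Rightarrow> ('a \<Rightarrow> real) \<Rightarrow> ereal" where
  "I_K M \<phi> = (if L2 M \<phi> \<and> (AE x in M. \<bar>\<phi> x\<bar> \<le> 1) then 0 else \<infinity>)"

definition weak_L2_conv :: "'a measure \<Rightarrow> ('b \<Rightarrow> 'a \<Rightarrow> real) \<Rightarrow> ('a \<Rightarrow> real) \<Rightarrow> 'b filter \<Rightarrow> bool" where
  "weak_L2_conv M fs f F \<longleftrightarrow>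
     (\<forall>\<psi>. L2 M \<psi> \<longrightarrow> ((\<lambda>a. \<integral>x. fs a x * \<psi> x \<partial>M) \<longlongrightarrow> (\<integral>x. f x * \<psi> x \<partial>M)) F)"

definition strong_L2_conv :: "'a measure \<Rightarrow> ('b \<Rightarrow> 'a \<Rightarrow> real) \<Rightarrow> ('a \<Rightarrow> real) \<Rightarrow> 'b filter \<Rightarrow> bool" where
  "strong_L2_conv M fs f F \<longleftrightarrow>
     ((\<lambda>a. \<integral>x. (fs a x - f x)\<^sup>2 \<partial>M) \<longlongrightarrow> 0) F"

end

theory Submission
  imports Defs
begin

lemma xlnx_lb: assumes "y \<ge> 0" shows "xlnx y \<ge> -1"
proof (cases "y = 0")
  case True then show ?thesis by (simp add: xlnx_def)
next
  case False
  then have yp: "y > 0" using assms by simp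
  have "ln (1/y) \<le> 1/y - 1" using yp by (intro ln_le_minus_one) simp
  then have "- ln y \<le> 1/y - 1" using yp by (simp add: ln_div)
  then have "y * (- ln y) \<le> y * (1/y - 1)" using yp by (intro mult_left_mono) auto
  also have "y * (1/y - 1) = 1 - y" using yp by (simp add: right_diff_distrib)
  finally show ?thesis using yp False by (simp add: xlnx_def)
qed

lemma xlnx_ub: assumes "y \<ge> 0" "y \<le> 3" shows "xlnx y \<le> 6"
proof (cases "y = 0")
  case True then show ?thesis by (simp add: xlnx_def)
next
  case False
  then have yp: "y > 0" using assms by simp
  have "ln y \<le> y - 1" using yp by (intro ln_le_minus_one)
  then have "y * ln y \<le> y * (y - 1)" using yp by (intro mult_left_mono) auto
  also have "\<dots> \<le> 6"
  proof (cases "y \<ge> 1")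
    case True
    have "y * (y - 1) \<le> 3 * 2" using True assms by (intro mult_mono) auto
    then show ?thesis by simp
  next
    case False
    have "y * (y - 1) \<le> 0" using False yp by (intro mult_nonneg_nonpos) auto
    then show ?thesis by simp
  qed
  finally show ?thesis using False by (simp add: xlnx_def)
qed

lemma W_lb: assumes "\<alpha> > 0" "\<bar>s\<bar> \<le> 1 + \<alpha>" shows "W_sg \<alpha> s \<ge> -2 * \<alpha>"
proof -
  have "xlnx (1 + \<alpha> + s) + xlnx (1 + \<alpha> - s) \<ge> -2"
  proof -
    have "xlnx (1 + \<alpha> + s) \<ge> -1" using assms by (intro xlnx_lb) auto
    moreover have "xlnx (1 + \<alpha> - s) \<ge> -1" using assms by (intro xlnx_lb) auto
    ultimately show ?thesis by simp
  qed
  then have "\<alpha> * (xlnx (1 + \<alpha> + s) + xlnx (1 + \<alpha> - s)) \<ge> \<alpha> * (-2)"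
    using assms by (intro mult_left_mono) auto
  then show ?thesis by (simp add: W_sg_def)
qed

lemma W_ub: assumes "\<alpha> > 0" "\<alpha> < 1" "\<bar>s\<bar> \<le> 1" shows "W_sg \<alpha> s \<le> 12 * \<alpha>"
proof -
  have "xlnx (1 + \<alpha> + s) + xlnx (1 + \<alpha> - s) \<le> 12"
  proof -
    have "xlnx (1 + \<alpha> + s) \<le> 6" using assms by (intro xlnx_ub) auto
    moreover have "xlnx (1 + \<alpha> - s) \<le> 6" using assms by (intro xlnx_ub) auto
    ultimately show ?thesis by simp
  qed
  then have "\<alpha> * (xlnx (1 + \<alpha> + s) + xlnx (1 + \<alpha> - s)) \<le> \<alpha> * 12"
    using assms by (intro mult_left_mono) auto
  then show ?thesis by (simp add: W_sg_def)
qed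

lemma E_lb:
  assumes fm: "finite_measure M" and a: "\<alpha> > 0"
  shows "E_sg M \<alpha> f \<ge> ereal (-2 * \<alpha> * measure M (space M))"
proof (cases "AE x in M. \<bar>f x\<bar> \<le> 1 + \<alpha>")
  case True
  interpret finite_measure M by (fact fm)
  have "(\<integral>x. W_sg \<alpha> (f x) \<partial>M) \<ge> -2 * \<alpha> * measure M (space M)"
  proof (cases "integrable M (\<lambda>x. W_sg \<alpha> (f x))")
    case True
    have "(\<integral>x. -2 * \<alpha> \<partial>M) \<le> (\<integral>x. W_sg \<alpha> (f x) \<partial>M)"
      using True `AE x in M. \<bar>f x\<bar> \<le> 1 + \<alpha>` a
      by (intro integral_mono_AE) (auto elim!: eventually_mono dest: W_lb)
    then show ?thesis by (simp add: mult_ac)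
  next
    case False
    then show ?thesis using a by (simp add: not_integrable_integral_eq)
  qed
  then show ?thesis using True by (simp add: E_sg_def)
next
  case False
  then show ?thesis by (simp add: E_sg_def)
qed

lemma E_ub:
  assumes fm: "finite_measure M" and a: "\<alpha> > 0" "\<alpha> < 1" and K: "AE x in M. \<bar>f x\<bar> \<le> 1"
  shows "E_sg M \<alpha> f \<le> ereal (12 * \<alpha> * measure M (space M))"
proof -
  interpret finite_measure M by (fact fm)
  have AE: "AE x in M. \<bar>f x\<bar> \<le> 1 + \<alpha>" using K a by (auto elim!: eventually_mono)
  have "(\<integral>x. W_sg \<alpha> (f x) \<partial>M) \<le> 12 * \<alpha> * measure M (space M)"
  proof (cases "integrable M (\<lambda>x. W_sg \<alpha> (f x))")
    case True
    have "(\<integral>x. W_sg \<alpha> (f x) \<partial>M) \<le> (\<integral>x. 12 * \<alpha> \<partial>M)"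
      using True K a
      by (intro integral_mono_AE) (auto elim!: eventually_mono intro: W_ub)
    then show ?thesis by (simp add: mult_ac)
  next
    case False
    then show ?thesis using a by (simp add: not_integrable_integral_eq)
  qed
  then show ?thesis using AE by (simp add: E_sg_def)
qed


lemma abs_le_sq: "\<bar>t::real\<bar> \<le> 1 + t\<^sup>2"
proof (cases "\<bar>t\<bar> \<le> 1")
  case True then show ?thesis by (simp add: add_increasing2)
next
  case False
  then have "\<bar>t\<bar> * 1 \<le> \<bar>t\<bar> * \<bar>t\<bar>" by (intro mult_left_mono) auto
  then show ?thesis by (simp add: power2_eq_square)
qed

lemma int_prod:
  assumes fm: "finite_measure M" and f: "L2 M f" and g: "g \<in> borel_measurable M"
    and gb: "\<And>x. \<bar>g x\<bar> \<le> 1"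
  shows "integrable M (\<lambda>x. f x * g x)"
proof -
  interpret finite_measure M by (fact fm)
  have fm': "f \<in> borel_measurable M" and f2: "integrable M (\<lambda>x. (f x)\<^sup>2)"
    using f by (auto simp: L2_def)
  have i1: "integrable M (\<lambda>x. 1 + (f x)\<^sup>2)" by (rule Bochner_Integration.integrable_add[OF integrable_const f2])
  have nb: "norm (f x * g x) \<le> norm (1 + (f x)\<^sup>2)" for x
  proof -
    have "\<bar>f x * g x\<bar> \<le> \<bar>f x\<bar> * 1" unfolding abs_mult using gb[of x]
      by (intro mult_left_mono) simp_all
    also have "\<dots> \<le> 1 + (f x)\<^sup>2" using abs_le_sq[of "f x"] by simp
    also have "\<dots> = norm (1 + (f x)\<^sup>2)" by simp
    finally show ?thesis by (simp only: real_norm_def)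
  qed
  have mb: "(\<lambda>x. f x * g x) \<in> borel_measurable M" using fm' g by (rule borel_measurable_times)
  show ?thesis
    by (rule Bochner_Integration.integrable_bound[OF i1 mb]) (intro AE_I2 nb)
qed

lemma notK:
  assumes fm: "finite_measure M" and Ls: "\<forall>\<alpha>>0. L2 M (\<phi>s \<alpha>)" and L: "L2 M \<phi>"
    and w: "weak_L2_conv M \<phi>s \<phi> (at_right 0)"
    and nK: "\<not> (AE x in M. \<bar>\<phi> x\<bar> \<le> 1)"
  shows "eventually (\<lambda>\<alpha>. \<not> (AE x in M. \<bar>\<phi>s \<alpha> x\<bar> \<le> 1 + \<alpha>)) (at_right (0::real))"
proof -
  interpret finite_measure M by (fact fm)
  have \<phi>m[measurable]: "\<phi> \<in> borel_measurable M" using L by (simp add: L2_def)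
  define \<psi> where "\<psi> x = (if \<phi> x > 1 then 1 else if \<phi> x < -1 then -1 else (0::real))" for x
  define A where "A = {x \<in> space M. \<bar>\<phi> x\<bar> > 1}"
  have \<psi>m[measurable]: "\<psi> \<in> borel_measurable M" unfolding \<psi>_def by measurable
  have Am[measurable]: "A \<in> sets M" unfolding A_def by measurable
  have \<psi>b: "\<bar>\<psi> x\<bar> \<le> 1" for x by (simp add: \<psi>_def)
  have \<psi>A: "x \<in> space M \<Longrightarrow> \<bar>\<psi> x\<bar> = indicator A x" for x
    by (auto simp: \<psi>_def A_def indicator_def)
  have L2\<psi>: "L2 M \<psi>"
    unfolding L2_def
  proof
    show "integrable M (\<lambda>x. (\<psi> x)\<^sup>2)"
      proof (rule Bochner_Integration.integrable_bound[where f="\<lambda>x. 1::real"])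
      show "AE x in M. norm ((\<psi> x)\<^sup>2) \<le> norm (1::real)"
        by (intro AE_I2) (simp add: \<psi>_def)
    qed simp_all
  qed simp
  have lim: "((\<lambda>a. \<integral>x. \<phi>s a x * \<psi> x \<partial>M) \<longlongrightarrow> (\<integral>x. \<phi> x * \<psi> x \<partial>M)) (at_right 0)"
    using w L2\<psi> by (simp add: weak_L2_conv_def)
  define c where "c = (\<integral>x. indicator A x \<partial>M :: real)"
  define L0 where "L0 = (\<integral>x. \<phi> x * \<psi> x \<partial>M)"
  define h where "h x = \<phi> x * \<psi> x - indicator A x" for x
  have iA: "integrable M (indicator A :: _ \<Rightarrow> real)"
    by (rule integrable_real_indicator[OF Am]) (simp add: less_top[symmetric])
  have ip: "integrable M (\<lambda>x. \<phi> x * \<psi> x)" using int_prod[OF fm L \<psi>m \<psi>b] .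
  have ih: "integrable M h" unfolding h_def using ip iA by simp
  have hnn: "x \<in> space M \<Longrightarrow> h x \<ge> 0" for x
    by (simp add: h_def \<psi>_def A_def indicator_def abs_if)
  have h0: "x \<in> space M \<Longrightarrow> h x = 0 \<Longrightarrow> \<bar>\<phi> x\<bar> \<le> 1" for x
    by (simp add: h_def \<psi>_def A_def indicator_def split: if_splits)
  have "integral\<^sup>L M h \<noteq> 0"
  proof
    assume "integral\<^sup>L M h = 0"
    then have "AE x in M. h x = 0"
      using integral_nonneg_eq_0_iff_AE[OF ih] hnn by (auto intro: AE_I2)
    then have "AE x in M. \<bar>\<phi> x\<bar> \<le> 1" using AE_space by eventually_elim (blast intro: h0)
    then show False using nK by simp
  qed
  moreover have "integral\<^sup>L M h \<ge> 0" using hnn by (intro integral_nonneg_AE) (auto intro: AE_I2)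
  ultimately have hpos: "integral\<^sup>L M h > 0" by simp
  have "integral\<^sup>L M h = L0 - c" unfolding h_def L0_def c_def using ip iA by simp
  with hpos have Lc: "L0 > c" by simp
  have c0: "c \<ge> 0" unfolding c_def by simp
  define \<epsilon> where "\<epsilon> = (L0 - c) / (2 * c + 2)"
  have \<epsilon>0: "\<epsilon> > 0" using Lc c0 by (simp add: \<epsilon>_def)
  define I where "I a = (\<integral>x. \<phi>s a x * \<psi> x \<partial>M)" for a
  have ev1: "eventually (\<lambda>a. I a > (L0 + c) / 2) (at_right 0)"
    using lim Lc unfolding L0_def[symmetric] I_def[symmetric] by (intro order_tendstoD(1)) auto
  have ev2: "eventually (\<lambda>a. a \<in> {0<..<\<epsilon>}) (at_right (0::real))"
    using \<epsilon>0 by (rule eventually_at_right_real)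
  show ?thesis
    using ev1 ev2
  proof eventually_elim
    case (elim a)
    then have a0: "a > 0" and a\<epsilon>: "a < \<epsilon>" by auto
    show ?case
    proof
      assume AEa: "AE x in M. \<bar>\<phi>s a x\<bar> \<le> 1 + a"
      have "(\<integral>x. \<phi>s a x * \<psi> x \<partial>M) \<le> (\<integral>x. (1 + a) * indicator A x \<partial>M)"
      proof (rule integral_mono_AE)
        show "integrable M (\<lambda>x. \<phi>s a x * \<psi> x)" using int_prod[OF fm _ \<psi>m \<psi>b] Ls a0 by simp
        show "integrable M (\<lambda>x. (1 + a) * indicator A x)" using iA by simp
        show "AE x in M. \<phi>s a x * \<psi> x \<le> (1 + a) * indicator A x"
          using AEa AE_space
        proof eventually_elim
          case (elim x)
          have "\<phi>s a x * \<psi> x \<le> \<bar>\<phi>s a x\<bar> * \<bar>\<psi> x\<bar>" by (metis abs_ge_self abs_mult)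
          also have "\<dots> \<le> (1 + a) * \<bar>\<psi> x\<bar>" using elim by (intro mult_right_mono) auto
          finally show ?case using \<psi>A[OF elim(2)] by simp
        qed
      qed
      also have "\<dots> = (1 + a) * c" unfolding c_def by simp
      also have "\<dots> = c + a * c" by (simp add: algebra_simps)
      finally have i1: "I a \<le> c + a * c" unfolding I_def .
      have "a * c \<le> \<epsilon> * c" using a\<epsilon> c0 by (intro mult_right_mono) auto
      also have "\<epsilon> * c < (L0 - c) / 2" using Lc c0 by (simp add: \<epsilon>_def field_simps)
      finally have i2: "a * c < (L0 - c) / 2" .
      show False using elim(1) i1 i2 by (simp add: field_simps)
    qed
  qed
qed

theorem mainTheorem8:
  fixes \<Omega> :: "(real^3) set" and T' :: real
  assumes "open \<Omega>" and "connected \<Omega>" and "\<Omega> \<noteq> {}" and "bounded \<Omega>" and "T' > 0"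
  defines "M \<equiv> lebesgue_on (cyl \<Omega> T')"
  shows "(\<forall>\<phi>s \<phi>. (\<forall>\<alpha>>0. L2 M (\<phi>s \<alpha>)) \<and> L2 M \<phi> \<and> weak_L2_conv M \<phi>s \<phi> (at_right 0)
            \<longrightarrow> Liminf (at_right 0) (\<lambda>\<alpha>. E_sg M \<alpha> (\<phi>s \<alpha>)) \<ge> I_K M \<phi>)
       \<and> (\<forall>\<phi>. L2 M \<phi> \<longrightarrow>
            (\<exists>\<phi>s. (\<forall>\<alpha>>0. L2 M (\<phi>s \<alpha>)) \<and> strong_L2_conv M \<phi>s \<phi> (at_right 0)
                  \<and> Limsup (at_right 0) (\<lambda>\<alpha>. E_sg M \<alpha> (\<phi>s \<alpha>)) \<le> I_K M \<phi>))"
proof -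
  have bI: "bounded {0<..<T'}" by (rule bounded_subset[OF bounded_cball[of 0 T']]) (auto simp: dist_real_def)
  have S: "cyl \<Omega> T' \<in> lmeasurable" unfolding cyl_def
    using assms(1,4) bI by (intro lmeasurable_open bounded_Times open_Times) auto
  have fm: "finite_measure M" unfolding M_def by (rule finite_measure_lebesgue_on[OF S])
  define m where "m = measure M (space M)"
  have ev01: "eventually (\<lambda>a. a \<in> {0<..<1}) (at_right (0::real))"
    by (rule eventually_at_right_real) simp
  have lim0: "((\<lambda>\<alpha>. ereal (k * \<alpha> * m)) \<longlongrightarrow> 0) (at_right 0)" for k :: real
  proof -
    have "((\<lambda>\<alpha>::real. k * \<alpha> * m) \<longlongrightarrow> k * 0 * m) (at_right 0)"
      by (intro tendsto_intros)
    then show ?thesis by (simp add: zero_ereal_def)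
  qed
  have P1: "\<forall>\<phi>s \<phi>. (\<forall>\<alpha>>0. L2 M (\<phi>s \<alpha>)) \<and> L2 M \<phi> \<and> weak_L2_conv M \<phi>s \<phi> (at_right 0)
            \<longrightarrow> Liminf (at_right 0) (\<lambda>\<alpha>. E_sg M \<alpha> (\<phi>s \<alpha>)) \<ge> I_K M \<phi>"
  proof (intro allI impI)
    fix \<phi>s \<phi> assume H: "(\<forall>\<alpha>>0. L2 M (\<phi>s \<alpha>)) \<and> L2 M \<phi> \<and> weak_L2_conv M \<phi>s \<phi> (at_right (0::real))"
    show "Liminf (at_right 0) (\<lambda>\<alpha>. E_sg M \<alpha> (\<phi>s \<alpha>)) \<ge> I_K M \<phi>"
    proof (cases "AE x in M. \<bar>\<phi> x\<bar> \<le> 1")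
      case True
      then have IK: "I_K M \<phi> = 0" using H by (simp add: I_K_def)
      have "Liminf (at_right 0) (\<lambda>\<alpha>. ereal (-2 * \<alpha> * m)) \<le> Liminf (at_right 0) (\<lambda>\<alpha>. E_sg M \<alpha> (\<phi>s \<alpha>))"
        proof (intro Liminf_mono)
        show "\<forall>\<^sub>F x in at_right 0. ereal (-2 * x * m) \<le> E_sg M x (\<phi>s x)"
          using ev01 by eventually_elim (use E_lb[OF fm] in \<open>simp add: m_def\<close>)
      qed
      moreover have "Liminf (at_right 0) (\<lambda>\<alpha>. ereal (-2 * \<alpha> * m)) = 0"
        by (intro lim_imp_Liminf lim0) simp
      ultimately show ?thesis using IK by simp
    next
      case False
      then have IK: "I_K M \<phi> = \<infinity>" by (simp add: I_K_def)
      have ev: "eventually (\<lambda>\<alpha>. \<not> (AE x in M. \<bar>\<phi>s \<alpha> x\<bar> \<le> 1 + \<alpha>)) (at_right (0::real))"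
        using H False by (intro notK[OF fm]) auto
      have "Liminf (at_right 0) (\<lambda>\<alpha>::real. \<infinity>::ereal) \<le> Liminf (at_right 0) (\<lambda>\<alpha>. E_sg M \<alpha> (\<phi>s \<alpha>))"
        using ev by (intro Liminf_mono) (auto elim!: eventually_mono simp: E_sg_def)
      moreover have "Liminf (at_right 0) (\<lambda>\<alpha>::real. \<infinity>::ereal) = \<infinity>" by (intro Liminf_const) simp
      ultimately show ?thesis using IK by simp
    qed
  qed
  have P2: "\<forall>\<phi>. L2 M \<phi> \<longrightarrow>
            (\<exists>\<phi>s. (\<forall>\<alpha>>0. L2 M (\<phi>s \<alpha>)) \<and> strong_L2_conv M \<phi>s \<phi> (at_right 0)
                  \<and> Limsup (at_right 0) (\<lambda>\<alpha>. E_sg M \<alpha> (\<phi>s \<alpha>)) \<le> I_K M \<phi>)"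
  proof (intro allI impI)
    fix \<phi> assume L: "L2 M \<phi>"
    show "\<exists>\<phi>s. (\<forall>\<alpha>>0. L2 M (\<phi>s \<alpha>)) \<and> strong_L2_conv M \<phi>s \<phi> (at_right 0)
                  \<and> Limsup (at_right 0) (\<lambda>\<alpha>. E_sg M \<alpha> (\<phi>s \<alpha>)) \<le> I_K M \<phi>"
    proof (intro exI[of _ "\<lambda>_. \<phi>"] conjI)
      show "\<forall>\<alpha>>0. L2 M \<phi>" using L by simp
      show "strong_L2_conv M (\<lambda>_. \<phi>) \<phi> (at_right 0)" by (simp add: strong_L2_conv_def)
      show "Limsup (at_right 0) (\<lambda>\<alpha>. E_sg M \<alpha> \<phi>) \<le> I_K M \<phi>"
      proof (cases "AE x in M. \<bar>\<phi> x\<bar> \<le> 1")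
        case True
        then have IK: "I_K M \<phi> = 0" using L by (simp add: I_K_def)
        have "Limsup (at_right 0) (\<lambda>\<alpha>. E_sg M \<alpha> \<phi>) \<le> Limsup (at_right 0) (\<lambda>\<alpha>. ereal (12 * \<alpha> * m))"
          proof (intro Limsup_mono)
          show "\<forall>\<^sub>F x in at_right 0. E_sg M x \<phi> \<le> ereal (12 * x * m)"
            using ev01 by eventually_elim (use E_ub[OF fm _ _ True] in \<open>simp add: m_def\<close>)
        qed
        moreover have "Limsup (at_right 0) (\<lambda>\<alpha>. ereal (12 * \<alpha> * m)) = 0"
          by (intro lim_imp_Limsup lim0) simp
        ultimately show ?thesis using IK by simp
      next
        case False
        then show ?thesis by (simp add: I_K_def)
      qed
    qed
  qed
  show ?thesis using P1 P2 by blast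
qed

end
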